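(* Let $R$ be a commutative semiring and $\varphi:R\to U$ an m-supervaluation which is tangibly surjective, i.e. $\mathcal T(U)\subset\varphi(R)$. Let $N:=\varphi(R)$ (a submonoid of $U$ containing $\mathcal T(U)\cup\{0\}$), $M:=eU$, and let $\tilde U(N)$ be the unfolding of $U$ along $N$ described below. (i) The map $\tilde\varphi:R\to\tilde U(N)$, $a\mapsto\widetilde{\varphi(a)}$, is a tangible m-supervaluation. (ii) If $\varphi':R\to U'$ is a tangible m-supervaluation dominating $\varphi$, then $\varphi'$ dominates $\tilde\varphi$.
   Context: A supertropical monoid is a commutative monoid $U$ with absorbing $0$, idempotent $e$ with $ex=0\Rightarrow x=0$, and a total order on $M:=eU$ compatible with multiplication, with $0$ least, making $M$ a bipotent semiring (addition $=\max$). $\mathcal T(U):=U\setminus eU$. An m-supervaluation is a map $\varphi:R\to U$ with $\varphi(0)=0$, $\varphi(1)=1$, $\varphi(ab)=\varphi(a)\varphi(b)$, $e\varphi(a+b)\le\max(e\varphi(a),e\varphi(b))$; it is tangible if $\varphi(R)\subset\mathcal T(U)\cup\{0\}$. For m-supervaluations $\varphi:R\to U$, $\psi:R\to V$, $\varphi$ dominates $\psi$ if for all $a,b\in R$: $\varphi(a)=\varphi(b)\Rightarrow\psi(a)=\psi(b)$; $e\varphi(a)\le e\varphi(b)\Rightarrow e\psi(a)\le e\psi(b)$; $\varphi(a)\in eU\Rightarrow\psi(a)\in eV$. Unfolding: let $\tilde N=\{\tilde x:x\in N\}$ be a copy of the monoid $N$ (with $\tilde x\tilde y=\widetilde{xy}$).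 $\tilde U(N)$ is the set $\tilde N\cup M$ with $\tilde N\cap M=\{0\}$ (identifying $\tilde 0=0$), multiplication $\tilde x\cdot\tilde y=\widetilde{xy}$, $\tilde x\cdot y=(ex)y$ for $y\in M$, and the product of $M$ on $M$; its unit is $\tilde 1$, its idempotent is $e=1_M$, with $e\tilde U(N)=M$ carrying the order of $M$. Thus $\mathcal T(\tilde U(N))=\tilde N\setminus\{0\}$, and $\tilde x$ is called the tangible lift of $x\in N$. *)

theory Defs
  imports Main
begin

record 'u stm =
  sm_carrier :: "'u set"
  sm_mult :: "'u \<Rightarrow> 'u \<Rightarrow> 'u"
  sm_one :: "'u"
  sm_zero :: "'u"
  sm_e :: "'u"
  sm_le :: "'u \<Rightarrow> 'u \<Rightarrow> bool"

definition sm_M :: "'u stm \<Rightarrow> 'u set" where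
  "sm_M U = (\<lambda>x. sm_mult U (sm_e U) x) ` sm_carrier U"

definition sm_T :: "'u stm \<Rightarrow> 'u set" where
  "sm_T U = sm_carrier U - sm_M U"

definition sm_max :: "'u stm \<Rightarrow> 'u \<Rightarrow> 'u \<Rightarrow> 'u" where
  "sm_max U x y = (if sm_le U x y then y else x)"

definition supertropical_monoid :: "'u stm \<Rightarrow> bool" where
  "supertropical_monoid U \<longleftrightarrow>
     (let C = sm_carrier U; m = sm_mult U; one = sm_one U; z = sm_zero U;
          e = sm_e U; le = sm_le U; M = sm_M U in
     one \<in> C \<and> z \<in> C \<and> e \<in> C \<and>
     (\<forall>x\<in>C. \<forall>y\<in>C. m x y \<in> C) \<and>
     (\<forall>x\<in>C. \<forall>y\<in>C. \<forall>w\<in>C. m (m x y) w = m x (m y w)) \<and>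
     (\<forall>x\<in>C. \<forall>y\<in>C. m x y = m y x) \<and>
     (\<forall>x\<in>C. m one x = x) \<and>
     (\<forall>x\<in>C. m z x = z) \<and>
     m e e = e \<and>
     (\<forall>x\<in>C. m e x = z \<longrightarrow> x = z) \<and>
     (\<forall>x\<in>M. le x x) \<and>
     (\<forall>x\<in>M. \<forall>y\<in>M. le x y \<and> le y x \<longrightarrow> x = y) \<and>
     (\<forall>x\<in>M. \<forall>y\<in>M. \<forall>w\<in>M. le x y \<and> le y w \<longrightarrow> le x w) \<and>
     (\<forall>x\<in>M. \<forall>y\<in>M. le x y \<or> le y x) \<and>
     (\<forall>x\<in>M. \<forall>y\<in>M. \<forall>w\<in>M. le x y \<longrightarrow> le (m x w) (m y w)) \<and>
     (\<forall>x\<in>M. le z x))"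

definition m_supervaluation :: "('a::comm_semiring_1 \<Rightarrow> 'u) \<Rightarrow> 'u stm \<Rightarrow> bool" where
  "m_supervaluation \<phi> U \<longleftrightarrow>
     (\<forall>a. \<phi> a \<in> sm_carrier U) \<and>
     \<phi> 0 = sm_zero U \<and> \<phi> 1 = sm_one U \<and>
     (\<forall>a b. \<phi> (a * b) = sm_mult U (\<phi> a) (\<phi> b)) \<and>
     (\<forall>a b. sm_le U (sm_mult U (sm_e U) (\<phi> (a + b)))
               (sm_max U (sm_mult U (sm_e U) (\<phi> a)) (sm_mult U (sm_e U) (\<phi> b))))"

definition tangible_sv :: "('a \<Rightarrow> 'u) \<Rightarrow> 'u stm \<Rightarrow> bool" where
  "tangible_sv \<phi> U \<longleftrightarrow> range \<phi> \<subseteq> sm_T U \<union> {sm_zero U}"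

definition tangibly_surjective :: "('a \<Rightarrow> 'u) \<Rightarrow> 'u stm \<Rightarrow> bool" where
  "tangibly_surjective \<phi> U \<longleftrightarrow> sm_T U \<subseteq> range \<phi>"

text \<open>dominates \<phi> U \<psi> V: \<phi> : R \<rightarrow> U dominates \<psi> : R \<rightarrow> V.\<close>
definition dominates :: "('a \<Rightarrow> 'u) \<Rightarrow> 'u stm \<Rightarrow> ('a \<Rightarrow> 'v) \<Rightarrow> 'v stm \<Rightarrow> bool" where
  "dominates \<phi> U \<psi> V \<longleftrightarrow>
     (\<forall>a b. \<phi> a = \<phi> b \<longrightarrow> \<psi> a = \<psi> b) \<and>
     (\<forall>a b. sm_le U (sm_mult U (sm_e U) (\<phi> a)) (sm_mult U (sm_e U) (\<phi> b)) \<longrightarrow>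
            sm_le V (sm_mult V (sm_e V) (\<psi> a)) (sm_mult V (sm_e V) (\<psi> b))) \<and>
     (\<forall>a. \<phi> a \<in> sm_M U \<longrightarrow> \<psi> a \<in> sm_M V)"

text \<open>Unfolding the unfold_stm U(N): elements are Inl x (the tangible lift of x \<in> N, x \<noteq> 0) and
  Inr y (y \<in> M); the tangible lift of 0 is identified with Inr 0.\<close>

definition tlift :: "'u stm \<Rightarrow> 'u \<Rightarrow> 'u + 'u" where
  "tlift U x = (if x = sm_zero U then Inr (sm_zero U) else Inl x)"

fun unf_mult :: "'u stm \<Rightarrow> 'u + 'u \<Rightarrow> 'u + 'u \<Rightarrow> 'u + 'u" where
  "unf_mult U (Inl x) (Inl y) = tlift U (sm_mult U x y)"
| "unf_mult U (Inl x) (Inr y) = Inr (sm_mult U (sm_mult U (sm_e U) x) y)"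
| "unf_mult U (Inr x) (Inl y) = Inr (sm_mult U x (sm_mult U (sm_e U) y))"
| "unf_mult U (Inr x) (Inr y) = Inr (sm_mult U x y)"

fun unf_le :: "'u stm \<Rightarrow> 'u + 'u \<Rightarrow> 'u + 'u \<Rightarrow> bool" where
  "unf_le U (Inr x) (Inr y) = sm_le U x y"
| "unf_le U _ _ = False"

definition unfold_stm :: "'u stm \<Rightarrow> 'u set \<Rightarrow> ('u + 'u) stm" where
  "unfold_stm U N =
     \<lparr> sm_carrier = tlift U ` N \<union> Inr ` sm_M U,
       sm_mult = unf_mult U,
       sm_one = tlift U (sm_one U),
       sm_zero = Inr (sm_zero U),
       sm_e = Inr (sm_e U),
       sm_le = unf_le U \<rparr>"

end

theory Submission
  imports Defs
begin

lemma stm_facts: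
  assumes "supertropical_monoid U"
  obtains "sm_e U \<in> sm_carrier U" "sm_zero U \<in> sm_carrier U"
    "\<forall>x\<in>sm_carrier U. \<forall>y\<in>sm_carrier U. sm_mult U x y = sm_mult U y x"
    "\<forall>x\<in>sm_carrier U. sm_mult U (sm_zero U) x = sm_zero U"
    "sm_mult U (sm_e U) (sm_e U) = sm_e U"
    "\<forall>x\<in>sm_carrier U. \<forall>y\<in>sm_carrier U. sm_mult U x y \<in> sm_carrier U"
    "\<forall>x\<in>sm_carrier U. \<forall>y\<in>sm_carrier U. \<forall>w\<in>sm_carrier U. sm_mult U (sm_mult U x y) w = sm_mult U x (sm_mult U y w)"
  using assms[unfolded supertropical_monoid_def Let_def]
  by (elim conjE) (rule that)

lemma unf_e_tlift:
  assumes "supertropical_monoid U" "x \<in> sm_carrier U"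
  shows "unf_mult U (Inr (sm_e U)) (tlift U x) = Inr (sm_mult U (sm_e U) x)"
proof -
  obtain A1: "sm_e U \<in> sm_carrier U" and A2: "sm_zero U \<in> sm_carrier U"
    and A3: "\<forall>x\<in>sm_carrier U. \<forall>y\<in>sm_carrier U. sm_mult U x y = sm_mult U y x"
    and A4: "\<forall>x\<in>sm_carrier U. sm_mult U (sm_zero U) x = sm_zero U"
    and A5: "sm_mult U (sm_e U) (sm_e U) = sm_e U"
    and A6: "\<forall>x\<in>sm_carrier U. \<forall>y\<in>sm_carrier U. sm_mult U x y \<in> sm_carrier U"
    and A7: "\<forall>x\<in>sm_carrier U. \<forall>y\<in>sm_carrier U. \<forall>w\<in>sm_carrier U. sm_mult U (sm_mult U x y) w = sm_mult U x (sm_mult U y w)"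
    using stm_facts[OF assms(1)] by blast
  show ?thesis
  proof (cases "x = sm_zero U")
    case True
    have "sm_mult U (sm_e U) (sm_zero U) = sm_zero U" using A1 A2 A3 A4 by metis
    then show ?thesis using True by (simp add: tlift_def)
  next
    case False
    have "sm_mult U (sm_e U) (sm_mult U (sm_e U) x) = sm_mult U (sm_e U) x"
      using A1 A5 A7 assms(2) by metis
    then show ?thesis using False by (simp add: tlift_def)
  qed
qed

theorem theorem7p10:
  fixes \<phi> :: "'a::comm_semiring_1 \<Rightarrow> 'u" and U :: "'u stm"
  assumes "supertropical_monoid U"
    and "m_supervaluation \<phi> U"
    and "tangibly_surjective \<phi> U"
  defines "N \<equiv> range \<phi>"
  shows "(m_supervaluation (\<lambda>a. tlift U (\<phi> a)) (unfold_stm U N)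
          \<and> tangible_sv (\<lambda>a. tlift U (\<phi> a)) (unfold_stm U N))
       \<and> (\<forall>(\<phi>' :: 'a \<Rightarrow> 'v) (U' :: 'v stm).
           supertropical_monoid U' \<and> m_supervaluation \<phi>' U' \<and>
           tangible_sv \<phi>' U' \<and> dominates \<phi>' U' \<phi> U \<longrightarrow>
           dominates \<phi>' U' (\<lambda>a. tlift U (\<phi> a)) (unfold_stm U N))"
proof -
  obtain A1: "sm_e U \<in> sm_carrier U" and A2: "sm_zero U \<in> sm_carrier U"
    and A3: "\<forall>x\<in>sm_carrier U. \<forall>y\<in>sm_carrier U. sm_mult U x y = sm_mult U y x"
    and A4: "\<forall>x\<in>sm_carrier U. sm_mult U (sm_zero U) x = sm_zero U"
    and A5: "sm_mult U (sm_e U) (sm_e U) = sm_e U"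
    and A6: "\<forall>x\<in>sm_carrier U. \<forall>y\<in>sm_carrier U. sm_mult U x y \<in> sm_carrier U"
    using stm_facts[OF assms(1)] by blast
  from assms(2)[unfolded m_supervaluation_def]
  obtain S1: "\<forall>a. \<phi> a \<in> sm_carrier U" and S2: "\<phi> 0 = sm_zero U" and S3: "\<phi> 1 = sm_one U"
    and S4: "\<forall>a b. \<phi> (a * b) = sm_mult U (\<phi> a) (\<phi> b)"
    and S5: "\<forall>a b. sm_le U (sm_mult U (sm_e U) (\<phi> (a + b)))
               (sm_max U (sm_mult U (sm_e U) (\<phi> a)) (sm_mult U (sm_e U) (\<phi> b)))"
    by (elim conjE) (rule that)
  have ze: "sm_mult U (sm_e U) (sm_zero U) = sm_zero U" using A1 A2 A3 A4 by metis
  have z1: "sm_mult U (sm_zero U) y = sm_zero U" if "y \<in> sm_carrier U" for y using A4 that by blast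
  have z2: "sm_mult U y (sm_zero U) = sm_zero U" if "y \<in> sm_carrier U" for y
    using A2 A3 A4 that by metis
  have E: "unf_mult U (Inr (sm_e U)) (tlift U (\<phi> a)) = Inr (sm_mult U (sm_e U) (\<phi> a))" for a
    using unf_e_tlift[OF assms(1)] S1 by blast
  have mx: "\<And>p q. sm_max (unfold_stm U N) (Inr p) (Inr q) = Inr (sm_max U p q)"
    by (simp add: sm_max_def unfold_stm_def)
  have mult: "tlift U (\<phi> (a * b)) = unf_mult U (tlift U (\<phi> a)) (tlift U (\<phi> b))" for a b
  proof -
    have ca: "\<phi> a \<in> sm_carrier U" and cb: "\<phi> b \<in> sm_carrier U" using S1 by auto
    have ea: "sm_mult U (sm_e U) (\<phi> a) \<in> sm_carrier U" and eb: "sm_mult U (sm_e U) (\<phi> b) \<in> sm_carrier U"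
      using A1 A6 ca cb by blast+
    have p: "\<phi> (a * b) = sm_mult U (\<phi> a) (\<phi> b)" using S4 by blast
    show ?thesis
    proof (cases "\<phi> a = sm_zero U")
      case True
      then show ?thesis using cb eb p z1 A2 by (simp add: tlift_def)
    next
      case False
      show ?thesis
      proof (cases "\<phi> b = sm_zero U")
        case True
        then show ?thesis using False ca ea p z2 by (simp add: tlift_def)
      next
        case False2: False
        then show ?thesis using False p by (simp add: tlift_def)
      qed
    qed
  qed
  have MU: "sm_M (unfold_stm U N) \<subseteq> range Inr"
  proof
    fix z assume "z \<in> sm_M (unfold_stm U N)"
    then obtain w where z: "z = unf_mult U (Inr (sm_e U)) w" unfolding sm_M_def unfold_stm_def by auto
    show "z \<in> range Inr" unfolding z by (cases w) auto
  qed
  have part1: "m_supervaluation (\<lambda>a. tlift U (\<phi> a)) (unfold_stm U N)"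
    unfolding m_supervaluation_def
  proof (intro conjI allI)
    fix a show "tlift U (\<phi> a) \<in> sm_carrier (unfold_stm U N)"
      by (simp add: unfold_stm_def N_def)
  next
    show "tlift U (\<phi> 0) = sm_zero (unfold_stm U N)" by (simp add: S2 tlift_def unfold_stm_def)
  next
    show "tlift U (\<phi> 1) = sm_one (unfold_stm U N)" by (simp add: S3 unfold_stm_def)
  next
    fix a b show "tlift U (\<phi> (a * b)) = sm_mult (unfold_stm U N) (tlift U (\<phi> a)) (tlift U (\<phi> b))"
      using mult by (simp add: unfold_stm_def)
  next
    fix a b
    have "sm_le U (sm_mult U (sm_e U) (\<phi> (a + b)))
               (sm_max U (sm_mult U (sm_e U) (\<phi> a)) (sm_mult U (sm_e U) (\<phi> b)))" using S5 by blast
    then show "sm_le (unfold_stm U N) (sm_mult (unfold_stm U N) (sm_e (unfold_stm U N)) (tlift U (\<phi> (a + b))))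
        (sm_max (unfold_stm U N) (sm_mult (unfold_stm U N) (sm_e (unfold_stm U N)) (tlift U (\<phi> a)))
          (sm_mult (unfold_stm U N) (sm_e (unfold_stm U N)) (tlift U (\<phi> b))))"
      using E mx by (simp add: unfold_stm_def)
  qed
  have part2: "tangible_sv (\<lambda>a. tlift U (\<phi> a)) (unfold_stm U N)"
    unfolding tangible_sv_def
  proof
    fix y assume "y \<in> range (\<lambda>a. tlift U (\<phi> a))"
    then obtain a where y: "y = tlift U (\<phi> a)" by auto
    show "y \<in> sm_T (unfold_stm U N) \<union> {sm_zero (unfold_stm U N)}"
    proof (cases "\<phi> a = sm_zero U")
      case True then show ?thesis by (simp add: y tlift_def unfold_stm_def)
    next
      case False
      then have "y = Inl (\<phi> a)" by (simp add: y tlift_def)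
      moreover have "Inl (\<phi> a) \<in> sm_carrier (unfold_stm U N)"
      proof -
        have "tlift U (\<phi> a) \<in> tlift U ` N" unfolding N_def by blast
        then show ?thesis using False by (simp add: unfold_stm_def tlift_def)
      qed
      moreover have "Inl (\<phi> a) \<notin> sm_M (unfold_stm U N)" using MU by auto
      ultimately show ?thesis by (simp add: sm_T_def)
    qed
  qed
  have part3: "dominates \<phi>' U' (\<lambda>a. tlift U (\<phi> a)) (unfold_stm U N)"
    if h: "supertropical_monoid U'" "m_supervaluation \<phi>' U'" "tangible_sv \<phi>' U'" "dominates \<phi>' U' \<phi> U"
    for \<phi>' :: "'a \<Rightarrow> 'v" and U' :: "'v stm"
  proof -
    from h(4)[unfolded dominates_def] obtain D1: "\<forall>a b. \<phi>' a = \<phi>' b \<longrightarrow> \<phi> a = \<phi> b"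
      and D2: "\<forall>a b. sm_le U' (sm_mult U' (sm_e U') (\<phi>' a)) (sm_mult U' (sm_e U') (\<phi>' b)) \<longrightarrow>
            sm_le U (sm_mult U (sm_e U) (\<phi> a)) (sm_mult U (sm_e U) (\<phi> b))"
      by (elim conjE) (rule that)
    from h(2)[unfolded m_supervaluation_def] have z': "\<phi>' 0 = sm_zero U'" by (elim conjE)
    show ?thesis unfolding dominates_def
    proof (intro conjI allI impI)
      fix a b assume "\<phi>' a = \<phi>' b" then show "tlift U (\<phi> a) = tlift U (\<phi> b)" using D1 by metis
    next
      fix a b
      assume "sm_le U' (sm_mult U' (sm_e U') (\<phi>' a)) (sm_mult U' (sm_e U') (\<phi>' b))"
      then have "sm_le U (sm_mult U (sm_e U) (\<phi> a)) (sm_mult U (sm_e U) (\<phi> b))" using D2 by blast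
      then show "sm_le (unfold_stm U N) (sm_mult (unfold_stm U N) (sm_e (unfold_stm U N)) (tlift U (\<phi> a)))
        (sm_mult (unfold_stm U N) (sm_e (unfold_stm U N)) (tlift U (\<phi> b)))"
        using E by (simp add: unfold_stm_def)
    next
      fix a assume "\<phi>' a \<in> sm_M U'"
      moreover have "\<phi>' a \<in> sm_T U' \<union> {sm_zero U'}" using h(3) unfolding tangible_sv_def by auto
      ultimately have "\<phi>' a = \<phi>' 0" using z' by (auto simp: sm_T_def)
      then have "\<phi> a = sm_zero U" using D1 S2 by metis
      then have t: "tlift U (\<phi> a) = Inr (sm_zero U)" by (simp add: tlift_def)
      have "sm_zero U \<in> sm_M U" unfolding sm_M_def using A2 ze by (metis image_eqI)
      then have c: "Inr (sm_zero U) \<in> sm_carrier (unfold_stm U N)" by (simp add: unfold_stm_def)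
      have "sm_mult (unfold_stm U N) (sm_e (unfold_stm U N)) (Inr (sm_zero U)) = Inr (sm_zero U)"
        by (simp add: unfold_stm_def ze)
      then show "tlift U (\<phi> a) \<in> sm_M (unfold_stm U N)"
        unfolding t sm_M_def using c by (metis image_eqI)
    qed
  qed
  show ?thesis using part1 part2 part3 by blast
qed

end
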